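(* For all integers $k\ge 1$ and $t\ge 1$, $$B_0(k+1,2t)+B_1(k,2t-1)=B_1(k,2t-2k-1)+p_{de}(2t-k-1)+p_{do}(2t-2k-1).$$
   Context: For a partition $\pi$, $s(\pi)$ is its smallest part. For $j\ge1$, $\mathrm{Spt}j_{do}(n)$ is the set of partitions $\pi$ of $n$ in which $s(\pi)$ occurs exactly $j$ times and the remaining parts (those larger than $s(\pi)$) are pairwise distinct and each has parity different from that of $s(\pi)$. $B_0(j,n)$ (resp. $B_1(j,n)$) is the number of $\pi\in\mathrm{Spt}j_{do}(n)$ whose number of parts greater than $s(\pi)$ is even (resp. odd); $B_0(j,n)=B_1(j,n)=0$ for $n\le 0$. $p_{de}(n)$ (resp. $p_{do}(n)$) is the number of partitions of $n$ into distinct even (resp. distinct odd) parts, with value $1$ at $n=0$ and $0$ for $n<0$. *)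

theory Defs
  imports Main "HOL-Library.Multiset"
begin

definition partitions :: "nat \<Rightarrow> nat multiset set" where
  "partitions n = {p. (\<forall>x\<in>#p. 0 < x) \<and> sum_mset p = n}"

text \<open>Smallest part s(pi) (meaningful for nonempty partitions).\<close>
definition spart :: "nat multiset \<Rightarrow> nat" where
  "spart p = Min (set_mset p)"

definition Spt_do :: "nat \<Rightarrow> nat \<Rightarrow> nat multiset set" where
  "Spt_do j n = {p \<in> partitions n. p \<noteq> {#} \<and>
      count p (spart p) = j \<and>
      (\<forall>x\<in>#p. spart p < x \<longrightarrow> count p x = 1 \<and> (odd x \<longleftrightarrow> even (spart p)))}"

definition nbig :: "nat multiset \<Rightarrow> nat" where
  "nbig p = size (filter_mset (\<lambda>x. spart p < x) p)"

definition B0 :: "nat \<Rightarrow> int \<Rightarrow> nat" where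
  "B0 j n = (if n \<le> 0 then 0 else card {p \<in> Spt_do j (nat n). even (nbig p)})"

definition B1 :: "nat \<Rightarrow> int \<Rightarrow> nat" where
  "B1 j n = (if n \<le> 0 then 0 else card {p \<in> Spt_do j (nat n). odd (nbig p)})"

definition pde :: "int \<Rightarrow> nat" where
  "pde n = (if n < 0 then 0 else
     card {p \<in> partitions (nat n). (\<forall>x\<in>#p. even x \<and> count p x = 1)})"

definition pdo :: "int \<Rightarrow> nat" where
  "pdo n = (if n < 0 then 0 else
     card {p \<in> partitions (nat n). (\<forall>x\<in>#p. odd x \<and> count p x = 1)})"

end

theory Submission
  imports Defs
begin

definition SB :: "nat \<Rightarrow> nat \<Rightarrow> nat \<Rightarrow> (nat \<times> nat set) set" where
  "SB j n par = {(s,B). 0<s \<and> finite B \<and> (\<forall>x\<in>B. s<x \<and> (odd x \<longleftrightarrow> even s))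
      \<and> j*s + \<Sum>B = n \<and> card B mod 2 = par}"

definition DE :: "nat \<Rightarrow> nat set set" where
  "DE n = {B. finite B \<and> (\<forall>x\<in>B. 0<x \<and> even x) \<and> \<Sum>B = n}"

definition DO :: "nat \<Rightarrow> nat set set" where
  "DO n = {B. finite B \<and> (\<forall>x\<in>B. odd x) \<and> \<Sum>B = n}"

definition mk :: "nat \<Rightarrow> nat \<times> nat set \<Rightarrow> nat multiset" where
  "mk j sb = replicate_mset j (fst sb) + mset_set (snd sb)"

lemma mk_props:
  assumes j: "j \<ge> 1" and fin: "finite B" and big: "\<forall>x\<in>B. s<x"
  shows "set_mset (mk j (s,B)) = insert s B"
    and "spart (mk j (s,B)) = s"
    and "count (mk j (s,B)) s = j"
    and "sum_mset (mk j (s,B)) = j*s + \<Sum>B"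
    and "nbig (mk j (s,B)) = card B"
    and "\<And>x. x \<in> B \<Longrightarrow> count (mk j (s,B)) x = 1"
proof -
  show S: "set_mset (mk j (s,B)) = insert s B" using j fin by (auto simp: mk_def)
  show "spart (mk j (s,B)) = s" unfolding spart_def S
    using fin big by (intro Min_eqI) force+
  show "count (mk j (s,B)) s = j" using big fin by (auto simp: mk_def)
  show "sum_mset (mk j (s,B)) = j*s + \<Sum>B"
    using fin by (simp add: mk_def sum_unfold_sum_mset)
  show "\<And>x. x \<in> B \<Longrightarrow> count (mk j (s,B)) x = 1" using big fin by (auto simp: mk_def)
  have "filter_mset (\<lambda>x. s < x) (mk j (s,B)) = mset_set B"
    using big fin by (auto simp: mk_def count_mset_set' intro!: multiset_eqI)
  moreover have "spart (mk j (s,B)) = s" unfolding spart_def S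
    using fin big by (intro Min_eqI) force+
  ultimately show "nbig (mk j (s,B)) = card B" by (simp add: nbig_def)
qed

lemma inv_facts:
  assumes p: "p \<in> Spt_do j n"
  shows "p = mk j (spart p, set_mset p - {spart p})"
    and "0 < spart p" and "\<forall>x\<in>set_mset p - {spart p}. spart p < x"
    and "spart p \<in># p"
proof -
  have ne: "p \<noteq> {#}" and pos: "\<forall>x\<in>#p. 0<x" and cnt: "count p (spart p) = j"
    and big: "\<forall>x\<in>#p. spart p < x \<longrightarrow> count p x = 1"
    using p by (auto simp: Spt_do_def partitions_def)
  have mem: "spart p \<in># p" unfolding spart_def using ne by (intro Min_in) auto
  show "spart p \<in># p" by (rule mem)
  have le: "\<And>x. x \<in># p \<Longrightarrow> spart p \<le> x" unfolding spart_def by simp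
  show "0 < spart p" using pos mem by auto
  show B: "\<forall>x\<in>set_mset p - {spart p}. spart p < x" using le by force
  show "p = mk j (spart p, set_mset p - {spart p})"
  proof (rule multiset_eqI)
    fix x
    show "count p x = count (mk j (spart p, set_mset p - {spart p})) x"
    proof (cases "x = spart p")
      case True thus ?thesis using cnt by (simp add: mk_def)
    next
      case False
      show ?thesis
      proof (cases "x \<in># p")
        case True
        hence "spart p < x" using le False by force
        thus ?thesis using big True False by (simp add: mk_def)
      next
        case F2: False
        thus ?thesis using False by (simp add: mk_def count_eq_zero_iff)
      qed
    qed
  qed
qed

lemma bridge1:
  assumes j: "j \<ge> 1"
  shows "bij_betw (mk j) (SB j n par) {p \<in> Spt_do j n. nbig p mod 2 = par}"
proof (rule bij_betw_byWitness[where f'="\<lambda>p. (spart p, set_mset p - {spart p})"])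
  show "\<forall>a\<in>SB j n par. (spart (mk j a), set_mset (mk j a) - {spart (mk j a)}) = a"
  proof
    fix a assume "a \<in> SB j n par"
    then obtain s B where a: "a = (s,B)" and fin: "finite B" and big: "\<forall>x\<in>B. s<x"
      by (auto simp: SB_def)
    have "s \<notin> B" using big by auto
    thus "(spart (mk j a), set_mset (mk j a) - {spart (mk j a)}) = a"
      using mk_props(1,2)[OF j fin big] a by auto
  qed
  show "\<forall>p\<in>{p \<in> Spt_do j n. nbig p mod 2 = par}.
          mk j (spart p, set_mset p - {spart p}) = p"
    using inv_facts(1) by (metis (no_types, lifting) mem_Collect_eq)
  show "mk j ` SB j n par \<subseteq> {p \<in> Spt_do j n. nbig p mod 2 = par}"
  proof
    fix p assume "p \<in> mk j ` SB j n par"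
    then obtain s B where p: "p = mk j (s,B)" and s: "0<s" and fin: "finite B"
      and big: "\<forall>x\<in>B. s<x \<and> (odd x \<longleftrightarrow> even s)" and sum: "j*s + \<Sum>B = n"
      and par: "card B mod 2 = par"
      by (auto simp: SB_def)
    have big': "\<forall>x\<in>B. s<x" using big by auto
    note P = mk_props[OF j fin big']
    have "p \<in> partitions n" unfolding partitions_def using P(1,4) p s sum big' by auto
    moreover have "p \<noteq> {#}" using P(1) p by auto
    moreover have "\<forall>x\<in>#p. spart p < x \<longrightarrow> count p x = 1 \<and> (odd x \<longleftrightarrow> even (spart p))"
      using P(1,2,6) p big by auto
    ultimately show "p \<in> {p \<in> Spt_do j n. nbig p mod 2 = par}"
      using P(2,3,5) p par by (auto simp: Spt_do_def)
  qed
  show "(\<lambda>p. (spart p, set_mset p - {spart p})) ` {p \<in> Spt_do j n. nbig p mod 2 = par}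
        \<subseteq> SB j n par"
  proof
    fix a assume "a \<in> (\<lambda>p. (spart p, set_mset p - {spart p})) ` {p \<in> Spt_do j n. nbig p mod 2 = par}"
    then obtain p where a: "a = (spart p, set_mset p - {spart p})" and p: "p \<in> Spt_do j n"
      and par: "nbig p mod 2 = par" by auto
    note I = inv_facts[OF p]
    define s where "s = spart p"
    define B where "B = set_mset p - {spart p}"
    have fin: "finite B" by (simp add: B_def)
    have big': "\<forall>x\<in>B. s<x" using I(3) by (simp add: B_def s_def)
    note P = mk_props[OF j fin big']
    have pe: "p = mk j (s,B)" using I(1) by (simp add: B_def s_def)
    have par2: "\<forall>x\<in>B. odd x \<longleftrightarrow> even s"
    proof
      fix x assume x: "x \<in> B"
      hence "s < x" using big' by auto
      moreover have "x \<in># p" using x by (simp add: B_def)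
      ultimately show "odd x \<longleftrightarrow> even s" using p by (simp add: Spt_do_def s_def)
    qed
    have "sum_mset p = n" using p by (auto simp: Spt_do_def partitions_def)
    hence "j*s + \<Sum>B = n" using P(4) pe by simp
    moreover have "card B mod 2 = par" using P(5) pe par by simp
    ultimately show "a \<in> SB j n par" using a I(2) fin big' par2
      by (auto simp: SB_def B_def s_def)
  qed
qed

lemma SB_zero: "j \<ge> 1 \<Longrightarrow> SB j 0 par = {}"
  by (auto simp: SB_def)

lemma B0_SB:
  assumes j: "j \<ge> 1" shows "B0 j n = card (SB j (nat n) 0)"
proof (cases "n \<le> 0")
  case True thus ?thesis using SB_zero[OF j] by (simp add: B0_def)
next
  case False
  have "{p \<in> Spt_do j m. even (nbig p)} = {p \<in> Spt_do j m. nbig p mod 2 = 0}" for m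
    by (auto simp: odd_iff_mod_2_eq_one)
  thus ?thesis using bij_betw_same_card[OF bridge1[OF j]] False
    by (auto simp: B0_def)
qed

lemma B1_SB:
  assumes j: "j \<ge> 1" shows "B1 j n = card (SB j (nat n) 1)"
proof (cases "n \<le> 0")
  case True thus ?thesis using SB_zero[OF j] by (simp add: B1_def)
next
  case False
  have "{p \<in> Spt_do j m. odd (nbig p)} = {p \<in> Spt_do j m. nbig p mod 2 = 1}" for m
    by (auto simp: odd_iff_mod_2_eq_one)
  thus ?thesis using bij_betw_same_card[OF bridge1[OF j]] False
    by (auto simp: B1_def)
qed

lemma mset_set_distinct: "\<forall>x\<in>#p. count p x = 1 \<Longrightarrow> mset_set (set_mset p) = p"
  by (rule multiset_eqI) (auto simp: count_mset_set' count_eq_zero_iff)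

lemma bridge2:
  assumes PQ: "\<And>x. Q x \<longleftrightarrow> (0 < x \<and> P x)"
  shows "bij_betw mset_set {B. finite B \<and> (\<forall>x\<in>B. Q x) \<and> \<Sum>B = m}
     {p \<in> partitions m. \<forall>x\<in>#p. P x \<and> count p x = 1}"
proof (rule bij_betw_byWitness[where f'=set_mset])
  show "\<forall>a\<in>{B. finite B \<and> (\<forall>x\<in>B. Q x) \<and> \<Sum>B = m}. set_mset (mset_set a) = a" by auto
  show "\<forall>a'\<in>{p \<in> partitions m. \<forall>x\<in>#p. P x \<and> count p x = 1}. mset_set (set_mset a') = a'"
  proof
    fix p assume "p \<in> {p \<in> partitions m. \<forall>x\<in>#p. P x \<and> count p x = 1}"
    hence "\<forall>x\<in>#p. count p x = 1" by auto
    thus "mset_set (set_mset p) = p" by (rule mset_set_distinct)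
  qed
  show "mset_set ` {B. finite B \<and> (\<forall>x\<in>B. Q x) \<and> \<Sum>B = m}
    \<subseteq> {p \<in> partitions m. \<forall>x\<in>#p. P x \<and> count p x = 1}"
    using PQ by (auto simp: partitions_def sum_unfold_sum_mset)
  show "set_mset ` {p \<in> partitions m. \<forall>x\<in>#p. P x \<and> count p x = 1}
    \<subseteq> {B. finite B \<and> (\<forall>x\<in>B. Q x) \<and> \<Sum>B = m}"
  proof
    fix B assume "B \<in> set_mset ` {p \<in> partitions m. \<forall>x\<in>#p. P x \<and> count p x = 1}"
    then obtain p where B: "B = set_mset p" and p: "p \<in> partitions m"
      and d: "\<forall>x\<in>#p. P x \<and> count p x = 1" by auto
    have "\<Sum>B = sum_mset (mset_set (set_mset p))" by (simp add: B sum_unfold_sum_mset)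
    also have "\<dots> = m" using mset_set_distinct[of p] d p by (simp add: partitions_def)
    finally show "B \<in> {B. finite B \<and> (\<forall>x\<in>B. Q x) \<and> \<Sum>B = m}"
      using B p d PQ by (auto simp: partitions_def)
  qed
qed

lemma pde_DE: "pde n = (if n < 0 then 0 else card (DE (nat n)))"
  using bij_betw_same_card[OF bridge2[of "\<lambda>x. 0<x \<and> even x" even]]
  by (simp add: pde_def DE_def)

lemma pdo_DO: "pdo n = (if n < 0 then 0 else card (DO (nat n)))"
proof -
  have "\<And>x::nat. odd x \<longleftrightarrow> (0 < x \<and> odd x)" using odd_pos by auto
  from bij_betw_same_card[OF bridge2[of odd odd, OF this]] show ?thesis
    by (simp add: pdo_def DO_def)
qed

lemma mem_le_sum: "finite B \<Longrightarrow> (x::nat) \<in> B \<Longrightarrow> x \<le> \<Sum>B"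
  by (metis member_le_sum zero_le)

lemma finite_SB: "j \<ge> 1 \<Longrightarrow> finite (SB j n par)"
proof -
  assume j: "j \<ge> 1"
  have "SB j n par \<subseteq> {..n} \<times> Pow {..n}"
  proof
    fix a assume "a \<in> SB j n par"
    then obtain s B where a: "a = (s,B)" and fin: "finite B" and sum: "j*s + \<Sum>B = n"
      by (auto simp: SB_def)
    have "s \<le> j*s" using j by simp
    hence "s \<le> n" using sum by linarith
    moreover have "\<forall>x\<in>B. x \<le> n" using mem_le_sum[OF fin] sum by fastforce
    ultimately show "a \<in> {..n} \<times> Pow {..n}" using a sum by auto
  qed
  thus ?thesis by (rule finite_subset) auto
qed

lemma finite_sets_sum: "finite {B. finite B \<and> (\<forall>x\<in>B. Q x) \<and> \<Sum>B = (n::nat)}"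
proof -
  have "{B. finite B \<and> (\<forall>x\<in>B. Q x) \<and> \<Sum>B = (n::nat)} \<subseteq> Pow {..n}"
    using mem_le_sum by fastforce
  thus ?thesis by (rule finite_subset) auto
qed

lemma finite_DE: "finite (DE n)" unfolding DE_def by (rule finite_sets_sum)
lemma finite_DO: "finite (DO n)" unfolding DO_def by (rule finite_sets_sum)

lemma card_split: "finite A \<Longrightarrow> card A = card {x\<in>A. P x} + card {x\<in>A. \<not> P x}"
proof -
  assume f: "finite A"
  have "A = {x\<in>A. P x} \<union> {x\<in>A. \<not> P x}" by auto
  hence "card A = card ({x\<in>A. P x} \<union> {x\<in>A. \<not> P x})" by simp
  also have "\<dots> = card {x\<in>A. P x} + card {x\<in>A. \<not> P x}"
    using f by (intro card_Un_disjoint) auto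
  finally show ?thesis .
qed

lemma odd_sum_parity:
  "finite B \<Longrightarrow> \<forall>x\<in>B. odd (x::nat) \<Longrightarrow> \<Sum>B mod 2 = card B mod 2"
proof (induction B rule: finite_induct)
  case empty thus ?case by simp
next
  case (insert a F)
  thus ?case by (simp add: mod_Suc_eq mod_add_eq[symmetric] odd_iff_mod_2_eq_one)
qed

lemma L1:
  assumes n: "n = m + 2*j"
  shows "card {x\<in>SB j n par. 3 \<le> fst x} = card {x\<in>SB j m par. Suc (fst x) \<notin> snd x}"
proof -
  have "bij_betw (\<lambda>(s,B). (s+2,B)) {x\<in>SB j m par. Suc (fst x) \<notin> snd x}
          {x\<in>SB j n par. 3 \<le> fst x}"
  proof (rule bij_betw_byWitness[where f'="\<lambda>(s,B). (s-2,B)"])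
    show "\<forall>a\<in>{x \<in> SB j m par. Suc (fst x) \<notin> snd x}. (case case a of (s, B) \<Rightarrow> (s + 2, B) of (s, B) \<Rightarrow> (s - 2, B)) = a"
      by auto
    show "\<forall>a'\<in>{x \<in> SB j n par. 3 \<le> fst x}. (case case a' of (s, B) \<Rightarrow> (s - 2, B) of (s, B) \<Rightarrow> (s + 2, B)) = a'"
      by auto
    show "(\<lambda>(s, B). (s + 2, B)) ` {x \<in> SB j m par. Suc (fst x) \<notin> snd x} \<subseteq> {x \<in> SB j n par. 3 \<le> fst x}"
    proof
      fix y assume "y \<in> (\<lambda>(s, B). (s + 2, B)) ` {x \<in> SB j m par. Suc (fst x) \<notin> snd x}"
      then obtain s B where y: "y = (s+2,B)" and s: "0<s" and fin: "finite B"
        and big: "\<forall>x\<in>B. s<x \<and> (odd x \<longleftrightarrow> even s)" and sum: "j*s + \<Sum>B = m"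
        and par: "card B mod 2 = par" and ns: "Suc s \<notin> B" by (auto simp: SB_def)
      have "\<forall>x\<in>B. s+2<x \<and> (odd x \<longleftrightarrow> even (s+2))"
      proof
        fix x assume x: "x \<in> B"
        have a: "s < x" and b: "odd x \<longleftrightarrow> even s" using big x by auto
        have c: "x \<noteq> Suc s" using ns x by auto
        have d: "x \<noteq> s + 2" using b by auto
        show "s+2<x \<and> (odd x \<longleftrightarrow> even (s+2))" using a b c d by simp
      qed
      moreover have "j*(s+2) + \<Sum>B = n" using sum n by (simp add: algebra_simps)
      ultimately show "y \<in> {x \<in> SB j n par. 3 \<le> fst x}" using y s fin par by (auto simp: SB_def)
    qed
    show "(\<lambda>(s, B). (s - 2, B)) ` {x \<in> SB j n par. 3 \<le> fst x} \<subseteq> {x \<in> SB j m par. Suc (fst x) \<notin> snd x}"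
    proof
      fix y assume "y \<in> (\<lambda>(s, B). (s - 2, B)) ` {x \<in> SB j n par. 3 \<le> fst x}"
      then obtain s B where y: "y = (s-2,B)" and s: "3 \<le> s" and fin: "finite B"
        and big: "\<forall>x\<in>B. s<x \<and> (odd x \<longleftrightarrow> even s)" and sum: "j*s + \<Sum>B = n"
        and par: "card B mod 2 = par" by (auto simp: SB_def)
      have "\<exists>u. s = u + 2" using s by presburger
      then obtain u where u: "s = u + 2" by blast
      have y': "y = (u, B)" using y u by simp
      have "j*u + \<Sum>B + 2*j = m + 2*j" using sum n u by (simp add: algebra_simps)
      hence "j*u + \<Sum>B = m" by linarith
      moreover have "\<forall>x\<in>B. u<x \<and> (odd x \<longleftrightarrow> even u)"
      proof
        fix x assume "x \<in> B"
        hence "s<x" "odd x \<longleftrightarrow> even s" using big by auto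
        thus "u<x \<and> (odd x \<longleftrightarrow> even u)" using u by simp
      qed
      moreover have "Suc u \<notin> B"
      proof
        assume "Suc u \<in> B"
        hence "s < Suc u" using big by blast
        thus False using u by simp
      qed
      moreover have "0 < u" using s u by simp
      ultimately show "y \<in> {x \<in> SB j m par. Suc (fst x) \<notin> snd x}"
        using y' fin par by (simp add: SB_def)
    qed
  qed
  thus ?thesis by (simp add: bij_betw_same_card)
qed

lemma L2:
  assumes n: "n = m + 2*j + 1"
  shows "card {x\<in>SB (j+1) n 0. 3 \<le> fst x} = card {x\<in>SB j m 1. Suc (fst x) \<in> snd x}"
proof -
  have "bij_betw (\<lambda>(s,B). (s+2, B - {Suc s})) {x\<in>SB j m 1. Suc (fst x) \<in> snd x}
          {x\<in>SB (j+1) n 0. 3 \<le> fst x}"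
  proof (rule bij_betw_byWitness[where f'="\<lambda>(s,B). (s-2, insert (s-1) B)"])
    show "\<forall>a\<in>{x\<in>SB j m 1. Suc (fst x) \<in> snd x}. (case case a of (s, B) \<Rightarrow> (s+2, B - {Suc s}) of (s, B) \<Rightarrow> (s-2, insert (s-1) B)) = a"
      by auto
    show "\<forall>a'\<in>{x\<in>SB (j+1) n 0. 3 \<le> fst x}. (case case a' of (s, B) \<Rightarrow> (s-2, insert (s-1) B) of (s, B) \<Rightarrow> (s+2, B - {Suc s})) = a'"
    proof
      fix a assume "a \<in> {x\<in>SB (j+1) n 0. 3 \<le> fst x}"
      then obtain s B where a: "a = (s,B)" and s: "3 \<le> s" and big: "\<forall>x\<in>B. s<x"
        by (auto simp: SB_def)
      have "s - 1 \<notin> B" using big s by force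
      moreover have "Suc (s-2) = s - 1" using s by simp
      moreover have "s - 2 + 2 = s" using s by simp
      ultimately show "(case case a of (s, B) \<Rightarrow> (s-2, insert (s-1) B) of (s, B) \<Rightarrow> (s+2, B - {Suc s})) = a"
        using a by simp
    qed
    show "(\<lambda>(s,B). (s+2, B - {Suc s})) ` {x\<in>SB j m 1. Suc (fst x) \<in> snd x} \<subseteq> {x\<in>SB (j+1) n 0. 3 \<le> fst x}"
    proof
      fix y assume "y \<in> (\<lambda>(s,B). (s+2, B - {Suc s})) ` {x\<in>SB j m 1. Suc (fst x) \<in> snd x}"
      then obtain s B where y: "y = (s+2, B - {Suc s})" and s: "0<s" and fin: "finite B"
        and big: "\<forall>x\<in>B. s<x \<and> (odd x \<longleftrightarrow> even s)" and sum: "j*s + \<Sum>B = m"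
        and par: "card B mod 2 = 1" and ns: "Suc s \<in> B" by (auto simp: SB_def)
      have A: "\<forall>x\<in>B - {Suc s}. s+2<x \<and> (odd x \<longleftrightarrow> even (s+2))"
      proof
        fix x assume x: "x \<in> B - {Suc s}"
        have a: "s < x" and b: "odd x \<longleftrightarrow> even s" using big x by auto
        have c: "x \<noteq> Suc s" using x by auto
        have d: "x \<noteq> s + 2" using b by auto
        show "s+2<x \<and> (odd x \<longleftrightarrow> even (s+2))" using a b c d by simp
      qed
      have "\<Sum>(B - {Suc s}) + Suc s = \<Sum>B" using fin ns by (simp add: sum.remove)
      hence S: "(j+1)*(s+2) + \<Sum>(B - {Suc s}) = n" using sum n by (simp add: algebra_simps)
      have "card (B - {Suc s}) + 1 = card B" using fin ns
        by (metis Suc_eq_plus1 card_Suc_Diff1)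
      hence C: "card (B - {Suc s}) mod 2 = 0" using par by presburger
      show "y \<in> {x\<in>SB (j+1) n 0. 3 \<le> fst x}" using y s fin A S C by (simp add: SB_def)
    qed
    show "(\<lambda>(s,B). (s-2, insert (s-1) B)) ` {x\<in>SB (j+1) n 0. 3 \<le> fst x} \<subseteq> {x\<in>SB j m 1. Suc (fst x) \<in> snd x}"
    proof
      fix y assume "y \<in> (\<lambda>(s,B). (s-2, insert (s-1) B)) ` {x\<in>SB (j+1) n 0. 3 \<le> fst x}"
      then obtain s B where y: "y = (s-2, insert (s-1) B)" and s: "3 \<le> s" and fin: "finite B"
        and big: "\<forall>x\<in>B. s<x \<and> (odd x \<longleftrightarrow> even s)" and sum: "(j+1)*s + \<Sum>B = n"
        and par: "card B mod 2 = 0" by (auto simp: SB_def)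
      have "\<exists>u. s = u + 2" using s by presburger
      then obtain u where u: "s = u + 2" by blast
      have y': "y = (u, insert (Suc u) B)" using y u by simp
      have nin: "Suc u \<notin> B"
      proof
        assume "Suc u \<in> B"
        hence "s < Suc u" using big by blast
        thus False using u by simp
      qed
      have A: "\<forall>x\<in>insert (Suc u) B. u<x \<and> (odd x \<longleftrightarrow> even u)"
      proof
        fix x assume x: "x \<in> insert (Suc u) B"
        show "u<x \<and> (odd x \<longleftrightarrow> even u)"
        proof (cases "x = Suc u")
          case True thus ?thesis by simp
        next
          case False
          hence "x \<in> B" using x by simp
          hence "s<x" "odd x \<longleftrightarrow> even s" using big by auto
          thus ?thesis using u by simp
        qed
      qed
      have "\<Sum>(insert (Suc u) B) = Suc u + \<Sum>B" using fin nin by simp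
      moreover have "(j+1)*(u+2) + \<Sum>B = m + 2*j + 1" using sum n u by simp
      ultimately have S: "j*u + \<Sum>(insert (Suc u) B) = m" by (simp add: algebra_simps)
      have "card (insert (Suc u) B) = Suc (card B)" using fin nin by simp
      hence C: "card (insert (Suc u) B) mod 2 = 1" using par by presburger
      have "0 < u" using s u by simp
      thus "y \<in> {x\<in>SB j m 1. Suc (fst x) \<in> snd x}" using y' fin A S C by (simp add: SB_def)
    qed
  qed
  thus ?thesis by (simp add: bij_betw_same_card)
qed

lemma P1:
  assumes "j \<le> n"
  shows "card {x\<in>SB j n par. fst x = 1} = card {B\<in>DE (n-j). card B mod 2 = par}"
proof -
  have "bij_betw snd {x\<in>SB j n par. fst x = 1} {B\<in>DE (n-j). card B mod 2 = par}"
  proof (rule bij_betw_byWitness[where f'="\<lambda>B. (1,B)"])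
    show "\<forall>a\<in>{x\<in>SB j n par. fst x = 1}. (1, snd a) = a" by auto
    show "\<forall>a'\<in>{B\<in>DE (n-j). card B mod 2 = par}. snd (1::nat, a') = a'" by auto
    show "snd ` {x\<in>SB j n par. fst x = 1} \<subseteq> {B\<in>DE (n-j). card B mod 2 = par}"
    proof
      fix B assume "B \<in> snd ` {x\<in>SB j n par. fst x = 1}"
      then obtain s where s: "s = 1" and "(s,B) \<in> SB j n par" by force
      hence fin: "finite B" and big: "\<forall>x\<in>B. 1<x \<and> (odd x \<longleftrightarrow> even (1::nat))"
        and sum: "j + \<Sum>B = n" and par: "card B mod 2 = par" by (auto simp: SB_def)
      have "\<forall>x\<in>B. 0<x \<and> even x" using big by auto
      moreover have "\<Sum>B = n - j" using sum by simp
      ultimately show "B \<in> {B\<in>DE (n-j). card B mod 2 = par}" using fin par by (simp add: DE_def)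
    qed
    show "(\<lambda>B. (1,B)) ` {B\<in>DE (n-j). card B mod 2 = par} \<subseteq> {x\<in>SB j n par. fst x = 1}"
    proof
      fix y assume "y \<in> (\<lambda>B. (1::nat,B)) ` {B\<in>DE (n-j). card B mod 2 = par}"
      then obtain B where y: "y = (1,B)" and fin: "finite B" and ev: "\<forall>x\<in>B. 0<x \<and> even x"
        and sum: "\<Sum>B = n - j" and par: "card B mod 2 = par" by (auto simp: DE_def)
      have "\<forall>x\<in>B. 1<x \<and> (odd x \<longleftrightarrow> even (1::nat))"
      proof
        fix x assume "x \<in> B" hence "0<x" "even x" using ev by auto
        thus "1<x \<and> (odd x \<longleftrightarrow> even (1::nat))" by (cases "x = 1") auto
      qed
      moreover have "j*1 + \<Sum>B = n" using sum assms by linarith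
      ultimately show "y \<in> {x\<in>SB j n par. fst x = 1}" using y fin par by (simp add: SB_def)
    qed
  qed
  thus ?thesis by (simp add: bij_betw_same_card)
qed

lemma P2:
  assumes "2*j \<le> n"
  shows "card {x\<in>SB j n par. fst x = 2} = card {B\<in>DO (n-2*j). 1 \<notin> B \<and> card B mod 2 = par}"
proof -
  have "bij_betw snd {x\<in>SB j n par. fst x = 2} {B\<in>DO (n-2*j). 1 \<notin> B \<and> card B mod 2 = par}"
  proof (rule bij_betw_byWitness[where f'="\<lambda>B. (2,B)"])
    show "\<forall>a\<in>{x\<in>SB j n par. fst x = 2}. (2, snd a) = a" by auto
    show "\<forall>a'\<in>{B\<in>DO (n-2*j). 1 \<notin> B \<and> card B mod 2 = par}. snd (2::nat, a') = a'" by auto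
    show "snd ` {x\<in>SB j n par. fst x = 2} \<subseteq> {B\<in>DO (n-2*j). 1 \<notin> B \<and> card B mod 2 = par}"
    proof
      fix B assume "B \<in> snd ` {x\<in>SB j n par. fst x = 2}"
      then obtain s where s: "s = 2" and "(s,B) \<in> SB j n par" by force
      hence fin: "finite B" and big: "\<forall>x\<in>B. 2<x \<and> (odd x \<longleftrightarrow> even (2::nat))"
        and sum: "j*2 + \<Sum>B = n" and par: "card B mod 2 = par" by (auto simp: SB_def)
      have "\<forall>x\<in>B. odd x" using big by auto
      moreover have "1 \<notin> B"
      proof
        assume "1 \<in> B" hence "2 < (1::nat)" using big by blast
        thus False by simp
      qed
      moreover have "\<Sum>B = n - 2*j" using sum by simp
      ultimately show "B \<in> {B\<in>DO (n-2*j). 1 \<notin> B \<and> card B mod 2 = par}" using fin par by (simp add: DO_def)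
    qed
    show "(\<lambda>B. (2,B)) ` {B\<in>DO (n-2*j). 1 \<notin> B \<and> card B mod 2 = par} \<subseteq> {x\<in>SB j n par. fst x = 2}"
    proof
      fix y assume "y \<in> (\<lambda>B. (2::nat,B)) ` {B\<in>DO (n-2*j). 1 \<notin> B \<and> card B mod 2 = par}"
      then obtain B where y: "y = (2,B)" and fin: "finite B" and od: "\<forall>x\<in>B. odd x"
        and n1: "1 \<notin> B"
        and sum: "\<Sum>B = n - 2*j" and par: "card B mod 2 = par" by (auto simp: DO_def)
      have "\<forall>x\<in>B. 2<x \<and> (odd x \<longleftrightarrow> even (2::nat))"
      proof
        fix x assume x: "x \<in> B" hence "odd x" "x \<noteq> 1" using od n1 by auto
        hence "2 < x" by presburger
        thus "2<x \<and> (odd x \<longleftrightarrow> even (2::nat))" using \<open>odd x\<close> by simp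
      qed
      moreover have "j*2 + \<Sum>B = n" using sum assms by linarith
      ultimately show "y \<in> {x\<in>SB j n par. fst x = 2}" using y fin par by (simp add: SB_def)
    qed
  qed
  thus ?thesis by (simp add: bij_betw_same_card)
qed

lemma split3:
  assumes j: "j \<ge> 1"
  shows "card (SB j n par) = card {x\<in>SB j n par. fst x = 1} + card {x\<in>SB j n par. fst x = 2}
     + card {x\<in>SB j n par. 3 \<le> fst x}"
proof -
  have f: "finite (SB j n par)" by (rule finite_SB[OF j])
  have pos: "\<forall>x\<in>SB j n par. 0 < fst x" by (auto simp: SB_def)
  have "SB j n par = ({x\<in>SB j n par. fst x = 1} \<union> {x\<in>SB j n par. fst x = 2})
     \<union> {x\<in>SB j n par. 3 \<le> fst x}"
  proof (rule set_eqI)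
    fix x show "x \<in> SB j n par \<longleftrightarrow> x \<in> ({x\<in>SB j n par. fst x = 1} \<union> {x\<in>SB j n par. fst x = 2})
     \<union> {x\<in>SB j n par. 3 \<le> fst x}"
      using pos[rule_format, of x] by (cases "fst x = 1"; cases "fst x = 2") auto
  qed
  hence "card (SB j n par) = card (({x\<in>SB j n par. fst x = 1} \<union> {x\<in>SB j n par. fst x = 2})
     \<union> {x\<in>SB j n par. 3 \<le> fst x})" by simp
  also have "\<dots> = card ({x\<in>SB j n par. fst x = 1} \<union> {x\<in>SB j n par. fst x = 2})
     + card {x\<in>SB j n par. 3 \<le> fst x}"
    using f by (intro card_Un_disjoint) auto
  also have "card ({x\<in>SB j n par. fst x = 1} \<union> {x\<in>SB j n par. fst x = 2}) =
     card {x\<in>SB j n par. fst x = 1} + card {x\<in>SB j n par. fst x = 2}"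
    using f by (intro card_Un_disjoint) auto
  finally show ?thesis .
qed

lemma empty_big:
  assumes "n < 2*j"
  shows "{x\<in>SB j n par. fst x = 2} = {}" and "{x\<in>SB j n par. 3 \<le> fst x} = {}"
proof -
  have "j*s \<le> n" if "(s,B) \<in> SB j n par" for s B using that by (auto simp: SB_def)
  moreover have "2*j \<le> j*s" if "2 \<le> s" for s::nat using that by (simp add: mult.commute)
  ultimately have "\<And>s B. (s,B) \<in> SB j n par \<Longrightarrow> s < 2"
    using assms by (meson le_trans not_less)
  thus "{x\<in>SB j n par. fst x = 2} = {}" and "{x\<in>SB j n par. 3 \<le> fst x} = {}"
    by fastforce+
qed

lemma empty_one:
  assumes "n < j"
  shows "{x\<in>SB j n par. fst x = 1} = {}"
proof -
  have "False" if "(s,B) \<in> SB j n par" "s = 1" for s B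
  proof -
    have "j*s + \<Sum>B = n" using that(1) by (simp add: SB_def)
    thus False using that(2) assms by simp
  qed
  thus ?thesis by fastforce
qed

lemma DE_split: "card (DE m) = card {B\<in>DE m. card B mod 2 = 0} + card {B\<in>DE m. card B mod 2 = 1}"
proof -
  have "{B\<in>DE m. \<not> card B mod 2 = 0} = {B\<in>DE m. card B mod 2 = 1}" by auto
  thus ?thesis using card_split[OF finite_DE, of m "\<lambda>B. card B mod 2 = 0"] by simp
qed

lemma DO_split: "card (DO m) = card {B\<in>DO m. 1 \<notin> B} + card {B\<in>DO m. 1 \<in> B}"
  using card_split[OF finite_DO, of m "\<lambda>B. 1 \<notin> B"] by simp

lemma DO_one: "card {B\<in>DO (Suc m). 1 \<in> B} = card {B\<in>DO m. 1 \<notin> B}"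
proof -
  have "bij_betw (\<lambda>B. B - {1}) {B\<in>DO (Suc m). 1 \<in> B} {B\<in>DO m. 1 \<notin> B}"
  proof (rule bij_betw_byWitness[where f'="insert 1"])
    show "\<forall>a\<in>{B\<in>DO (Suc m). 1 \<in> B}. insert 1 (a - {1}) = a" by auto
    show "\<forall>a'\<in>{B\<in>DO m. 1 \<notin> B}. insert 1 a' - {1} = a'" by auto
    show "(\<lambda>B. B - {1}) ` {B\<in>DO (Suc m). 1 \<in> B} \<subseteq> {B\<in>DO m. 1 \<notin> B}"
    proof
      fix C assume "C \<in> (\<lambda>B. B - {1}) ` {B\<in>DO (Suc m). 1 \<in> B}"
      then obtain B where C: "C = B - {1}" and fin: "finite B" and od: "\<forall>x\<in>B. odd x"
        and sum: "\<Sum>B = Suc m" and one: "1 \<in> B" by (auto simp: DO_def)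
      have "\<Sum>(B - {1}) + 1 = \<Sum>B" using fin one by (simp add: sum.remove)
      hence "\<Sum>C = m" using C sum by simp
      moreover have "finite C" using C fin by simp
      moreover have "\<forall>x\<in>C. odd x" using C od by simp
      moreover have "1 \<notin> C" using C by simp
      ultimately show "C \<in> {B\<in>DO m. 1 \<notin> B}" by (simp add: DO_def)
    qed
    show "insert 1 ` {B\<in>DO m. 1 \<notin> B} \<subseteq> {B\<in>DO (Suc m). 1 \<in> B}"
    proof
      fix C assume "C \<in> insert 1 ` {B\<in>DO m. 1 \<notin> B}"
      then obtain B where C: "C = insert 1 B" and B: "B \<in> DO m" and one: "1 \<notin> B" by blast
      have fin: "finite B" and od: "\<forall>x\<in>B. odd x" and sum: "\<Sum>B = m"
        using B by (simp_all add: DO_def)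
      have "\<Sum>C = Suc m" using C fin one sum by simp
      moreover have "\<forall>x\<in>C. odd x" using C od by simp
      ultimately show "C \<in> {B\<in>DO (Suc m). 1 \<in> B}" using C fin by (simp add: DO_def)
    qed
  qed
  thus ?thesis by (simp add: bij_betw_same_card)
qed

lemma DO_par:
  assumes "m mod 2 = par"
  shows "{B\<in>DO m. 1 \<notin> B \<and> card B mod 2 = par} = {B\<in>DO m. 1 \<notin> B}"
proof (rule set_eqI)
  fix B
  show "B \<in> {B\<in>DO m. 1 \<notin> B \<and> card B mod 2 = par} \<longleftrightarrow> B \<in> {B\<in>DO m. 1 \<notin> B}"
  proof
    assume "B \<in> {B\<in>DO m. 1 \<notin> B}"
    hence fin: "finite B" and od: "\<forall>x\<in>B. odd x" and sum: "\<Sum>B = m" and one: "1 \<notin> B"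
      by (simp_all add: DO_def)
    have "card B mod 2 = par" using odd_sum_parity[OF fin od] sum assms by simp
    thus "B \<in> {B\<in>DO m. 1 \<notin> B \<and> card B mod 2 = par}" using fin od sum one by (simp add: DO_def)
  qed simp
qed


theorem lemma2:
  fixes k t :: int
  assumes "k \<ge> 1" and "t \<ge> 1"
  shows "B0 (nat (k + 1)) (2*t) + B1 (nat k) (2*t - 1)
       = B1 (nat k) (2*t - 2*k - 1) + pde (2*t - k - 1) + pdo (2*t - 2*k - 1)"
proof -
  define K where "K = nat k"
  define T where "T = nat t"
  have k: "k = int K" using assms(1) unfolding K_def by simp
  have t: "t = int T" using assms(2) unfolding T_def by simp
  have K1: "K \<ge> 1" "K+1 \<ge> 1" using assms(1) k by simp_all
  have T1: "T \<ge> 1" using assms(2) t by simp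
  have n1: "nat (k+1) = K+1" using k by simp
  have n2: "2*t = int (2*T)" using t by simp
  have n3: "2*t - 1 = int (2*T-1)" using t T1 by (simp add: of_nat_diff)
  have e1: "B0 (nat (k + 1)) (2*t) = card (SB (K+1) (2*T) 0)"
    unfolding n1 n2 B0_SB[OF K1(2)] nat_int ..
  have e2: "B1 (nat k) (2*t - 1) = card (SB K (2*T-1) 1)"
    using B1_SB[OF K1(1), of "int (2*T-1)"] unfolding n3 K_def by simp
  have sa: "card (SB (K+1) (2*T) 0) = card {x\<in>SB (K+1) (2*T) 0. fst x = 1}
      + card {x\<in>SB (K+1) (2*T) 0. fst x = 2} + card {x\<in>SB (K+1) (2*T) 0. 3 \<le> fst x}"
    using split3[OF K1(2)] .
  have sb: "card (SB K (2*T-1) 1) = card {x\<in>SB K (2*T-1) 1. fst x = 1}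
      + card {x\<in>SB K (2*T-1) 1. fst x = 2} + card {x\<in>SB K (2*T-1) 1. 3 \<le> fst x}"
    using split3[OF K1(1)] .
  show ?thesis
  proof (cases "K < T")
    case True
    define M where "M = 2*T - 2*K - 1"
    have M: "2*T = M + 2*K + 1" "2*T - 1 = M + 2*K" "M mod 2 = 1" "M = Suc (M - 1)"
      "(M-1) mod 2 = 0" using True unfolding M_def by presburger+
    have e3: "B1 (nat k) (2*t - 2*k - 1) = card (SB K M 1)"
    proof -
      have "nat (2*t - 2*k - 1) = M" using True k t by (simp add: M_def)
      thus ?thesis using B1_SB[OF K1(1)] k by simp
    qed
    have e4: "pde (2*t - k - 1) = card (DE (2*T - (K+1)))"
    proof -
      have "\<not> 2*t - k - 1 < 0" "nat (2*t - k - 1) = 2*T - (K+1)" using True k t by simp_all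
      thus ?thesis by (simp add: pde_DE)
    qed
    have e5: "pdo (2*t - 2*k - 1) = card (DO M)"
    proof -
      have "\<not> 2*t - 2*k - 1 < 0" "nat (2*t - 2*k - 1) = M" using True k t by (simp_all add: M_def)
      thus ?thesis by (simp add: pdo_DO)
    qed
    have c1a: "card {x\<in>SB (K+1) (2*T) 0. fst x = 1} = card {B\<in>DE (2*T - (K+1)). card B mod 2 = 0}"
      using P1 True by simp
    have c1b: "card {x\<in>SB K (2*T-1) 1. fst x = 1} = card {B\<in>DE (2*T - (K+1)). card B mod 2 = 1}"
    proof -
      have "2*T - 1 - K = 2*T - (K+1)" by simp
      thus ?thesis using P1[of K "2*T-1" 1] True by simp
    qed
    have c2a: "card {x\<in>SB (K+1) (2*T) 0. fst x = 2} = card {B\<in>DO (M-1). 1 \<notin> B}"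
    proof -
      have "2*T - 2*(K+1) = M - 1" using M by simp
      thus ?thesis using P2[of "K+1" "2*T" 0] True DO_par[OF M(5)] by simp
    qed
    have c2b: "card {x\<in>SB K (2*T-1) 1. fst x = 2} = card {B\<in>DO M. 1 \<notin> B}"
    proof -
      have "2*T - 1 - 2*K = M" using M by simp
      thus ?thesis using P2[of K "2*T-1" 1] True DO_par[OF M(3)] by simp
    qed
    have c3a: "card {x\<in>SB (K+1) (2*T) 0. 3 \<le> fst x} = card {x\<in>SB K M 1. Suc (fst x) \<in> snd x}"
      using L2[OF M(1)] by simp
    have c3b: "card {x\<in>SB K (2*T-1) 1. 3 \<le> fst x} = card {x\<in>SB K M 1. Suc (fst x) \<notin> snd x}"
      using L1[OF M(2)] by simp
    have d1: "card (SB K M 1) = card {x\<in>SB K M 1. Suc (fst x) \<in> snd x} + card {x\<in>SB K M 1. Suc (fst x) \<notin> snd x}"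
      using card_split[OF finite_SB[OF K1(1)], of M 1 "\<lambda>x. Suc (fst x) \<in> snd x"] by simp
    have d2: "card (DO M) = card {B\<in>DO M. 1 \<notin> B} + card {B\<in>DO (M-1). 1 \<notin> B}"
      using DO_split[of M] DO_one[of "M-1"] M(4) by simp
    have d3: "card (DE (2*T - (K+1))) = card {B\<in>DE (2*T - (K+1)). card B mod 2 = 0}
       + card {B\<in>DE (2*T - (K+1)). card B mod 2 = 1}" by (rule DE_split)
    show ?thesis unfolding e1 e2 e3 e4 e5 sa sb c1a c1b c2a c2b c3a c3b d1 d2 d3 by simp
  next
    case False
    have e3: "B1 (nat k) (2*t - 2*k - 1) = 0"
      using False k t by (simp add: B1_def)
    have e5: "pdo (2*t - 2*k - 1) = 0"
      using False k t by (simp add: pdo_def)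
    have z: "{x\<in>SB (K+1) (2*T) 0. fst x = 2} = {}" "{x\<in>SB (K+1) (2*T) 0. 3 \<le> fst x} = {}"
      "{x\<in>SB K (2*T-1) 1. fst x = 2} = {}" "{x\<in>SB K (2*T-1) 1. 3 \<le> fst x} = {}"
    proof -
      have "2*T < 2*(K+1)" "2*T-1 < 2*K" using False T1 by arith+
      thus "{x\<in>SB (K+1) (2*T) 0. fst x = 2} = {}" "{x\<in>SB (K+1) (2*T) 0. 3 \<le> fst x} = {}"
      "{x\<in>SB K (2*T-1) 1. fst x = 2} = {}" "{x\<in>SB K (2*T-1) 1. 3 \<le> fst x} = {}"
        using empty_big by blast+
    qed
    show ?thesis
    proof (cases "K + 1 \<le> 2*T")
      case True
      have e4: "pde (2*t - k - 1) = card (DE (2*T - (K+1)))"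
      proof -
        have "\<not> 2*t - k - 1 < 0" "nat (2*t - k - 1) = 2*T - (K+1)" using True k t by simp_all
        thus ?thesis by (simp add: pde_DE)
      qed
      have c1a: "card {x\<in>SB (K+1) (2*T) 0. fst x = 1} = card {B\<in>DE (2*T - (K+1)). card B mod 2 = 0}"
        using P1 True by simp
      have c1b: "card {x\<in>SB K (2*T-1) 1. fst x = 1} = card {B\<in>DE (2*T - (K+1)). card B mod 2 = 1}"
      proof -
        have "2*T - 1 - K = 2*T - (K+1)" by simp
        thus ?thesis using P1[of K "2*T-1" 1] True by simp
      qed
      show ?thesis unfolding e1 e2 e3 e4 e5 sa sb c1a c1b z DE_split by simp
    next
      case F2: False
      have e4: "pde (2*t - k - 1) = 0" using F2 k t by (simp add: pde_def)
      have z1: "{x\<in>SB (K+1) (2*T) 0. fst x = 1} = {}" "{x\<in>SB K (2*T-1) 1. fst x = 1} = {}"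
      proof -
        have "2*T < K+1" "2*T-1 < K" using F2 T1 by arith+
        thus "{x\<in>SB (K+1) (2*T) 0. fst x = 1} = {}" "{x\<in>SB K (2*T-1) 1. fst x = 1} = {}"
          using empty_one by blast+
      qed
      show ?thesis unfolding e1 e2 e3 e4 e5 sa sb z z1 by simp
    qed
  qed
qed

end
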